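(* An $r$-partite partition $\boldsymbol\lambda=(\lambda^0\mid\lambda^1\mid\cdots\mid\lambda^{r-1})$ of size $n$ is the cycle type of an absolute square in $G(r,1,n)$ (an element of the form $\pi\overline{\pi}$ with $\pi\in G(r,1,n)$) if and only if: (1) each even part of $\lambda^0$ has even multiplicity; (2) $\lambda^t=\lambda^{r-t}$ for all $1\le t<r/2$; and (3) when $r$ is even, each part of $\lambda^{r/2}$ has even multiplicity.
   Context: $G(r,1,n)=\{(z_1,\dots,z_n;\sigma):z_i\in\mathbb{Z}_r,\sigma\in S_n\}$ with product $(z;\sigma)(z';\sigma')=(z_1+z'_{\sigma^{-1}(1)},\dots,z_n+z'_{\sigma^{-1}(n)};\sigma\sigma')$. The bar operation is $\overline{(z_1,\dots,z_n;\sigma)}=(-z_1,\dots,-z_n;\sigma)$. The color of a cycle $(u_1,\dots,u_\ell)$ of $\sigma$ is $z_{u_1}+\cdots+z_{u_\ell}\in\mathbb{Z}_r$; the cycle type of $(z;\sigma)$ is $(\lambda^0\mid\cdots\mid\lambda^{r-1})$ where $\lambda^j$ is the partition of the lengths of cycles of color $j$. *)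

theory Defs
  imports "HOL-Combinatorics.Permutations" "HOL-Library.Multiset"
begin

text \<open>Elements of G(r,1,n) are pairs (z, sigma): sigma a permutation of {0..<n}
  (the paper's {1..n} shifted by one), z i the colour in Z_r of position i,
  represented by a natural number < r (and 0 outside {0..<n}).\<close>

type_synonym gelt = "(nat \<Rightarrow> nat) \<times> (nat \<Rightarrow> nat)"

definition in_G :: "nat \<Rightarrow> nat \<Rightarrow> gelt \<Rightarrow> bool" where
  "in_G r n g \<longleftrightarrow> snd g permutes {0..<n} \<and> (\<forall>i<n. fst g i < r) \<and> (\<forall>i\<ge>n. fst g i = 0)"

definition gmult :: "nat \<Rightarrow> nat \<Rightarrow> gelt \<Rightarrow> gelt \<Rightarrow> gelt" where
  "gmult r n g h = ((\<lambda>i. if i < n then (fst g i + fst h (inv (snd g) i)) mod r else 0),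
                    snd g \<circ> snd h)"

definition gbar :: "nat \<Rightarrow> nat \<Rightarrow> gelt \<Rightarrow> gelt" where
  "gbar r n g = ((\<lambda>i. if i < n then (r - fst g i) mod r else 0), snd g)"

definition cycle_of :: "(nat \<Rightarrow> nat) \<Rightarrow> nat \<Rightarrow> nat set" where
  "cycle_of s u = {(s ^^ k) u | k. True}"

definition cycles_of :: "nat \<Rightarrow> (nat \<Rightarrow> nat) \<Rightarrow> nat set set" where
  "cycles_of n s = cycle_of s ` {0..<n}"

definition cycle_color :: "nat \<Rightarrow> gelt \<Rightarrow> nat set \<Rightarrow> nat" where
  "cycle_color r g C = (\<Sum>u\<in>C. fst g u) mod r"

definition cycle_type :: "nat \<Rightarrow> nat \<Rightarrow> gelt \<Rightarrow> nat \<Rightarrow> nat multiset" where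
  "cycle_type r n g j = image_mset card (mset_set {C \<in> cycles_of n (snd g). cycle_color r g C = j})"

definition rpartite_partition :: "nat \<Rightarrow> nat \<Rightarrow> (nat \<Rightarrow> nat multiset) \<Rightarrow> bool" where
  "rpartite_partition r n lam \<longleftrightarrow> (\<forall>j. 0 \<notin># lam j) \<and> (\<forall>j\<ge>r. lam j = {#})
     \<and> (\<Sum>j<r. sum_mset (lam j)) = n"

end

theory Submission
  imports Defs "HOL-Combinatorics.Orbits"
begin


lemma funpow_sq: "((s::'a\<Rightarrow>'a) \<circ> s) ^^ i = s ^^ (2*i)"
proof -
  have "s \<circ> s = s ^^ 2" by (simp add: numeral_2_eq_2)
  then show ?thesis by (simp add: funpow_mult)
qed

lemma funpow_comm_sq: "s (((s \<circ> s) ^^ i) u) = ((s \<circ> s) ^^ i) (s u)"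
  by (induct i) auto

lemma cycle_of_image_comm: "s ` cycle_of (s \<circ> s) u = cycle_of (s \<circ> s) (s u)"
proof
  show "s ` cycle_of (s \<circ> s) u \<subseteq> cycle_of (s \<circ> s) (s u)"
    unfolding cycle_of_def by (auto simp: funpow_comm_sq)
  show "cycle_of (s \<circ> s) (s u) \<subseteq> s ` cycle_of (s \<circ> s) u"
  proof
    fix y assume "y \<in> cycle_of (s \<circ> s) (s u)"
    then obtain k where "y = ((s \<circ> s) ^^ k) (s u)" unfolding cycle_of_def by blast
    then have "y = s (((s \<circ> s) ^^ k) u)" by (simp add: funpow_comm_sq)
    then show "y \<in> s ` cycle_of (s \<circ> s) u" unfolding cycle_of_def by blast
  qed
qed

lemma perm_image_cycle:
  assumes "permutation f" shows "f ` cycle_of f u = cycle_of f u"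
proof
  show "f ` cycle_of f u \<subseteq> cycle_of f u"
    unfolding cycle_of_def
  proof (clarsimp)
    fix k show "\<exists>k'. f ((f ^^ k) u) = (f ^^ k') u" by (rule exI[of _ "Suc k"]) simp
  qed
next
  obtain p where p: "p > 0" "(f ^^ p) u = u" using permutation_self[OF assms] by blast
  show "cycle_of f u \<subseteq> f ` cycle_of f u"
  proof
    fix y assume "y \<in> cycle_of f u"
    then obtain k where k: "y = (f ^^ k) u" unfolding cycle_of_def by blast
    have "y = (f ^^ (k + p)) u" using k p by (simp add: funpow_add)
    also have "\<dots> = f ((f ^^ (k + p - 1)) u)" using p
      by (metis Suc_diff_1 add_gr_0 comp_apply funpow.simps(2))
    finally show "y \<in> f ` cycle_of f u" unfolding cycle_of_def by blast
  qed
qed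

lemma odd_card_inv_cycle:
  assumes perm: "permutation s" and inv: "s ` cycle_of (s \<circ> s) u = cycle_of (s \<circ> s) u"
  shows "odd (card (cycle_of (s \<circ> s) u))"
proof -
  define C where "C = cycle_of (s \<circ> s) u"
  have uC: "u \<in> C" unfolding C_def cycle_of_def by (auto intro!: exI[of _ 0])
  have sinj: "inj s" using bij_is_inj[OF permutation_bijective[OF perm]] .
  have "s u \<in> C" using inv uC C_def by blast
  then obtain j where j: "s u = (s ^^ (2*j)) u" unfolding C_def cycle_of_def funpow_sq by auto
  have CO: "C = orbit s u"
  proof
    show "C \<subseteq> orbit s u" unfolding C_def cycle_of_def funpow_sq orbit_altdef_permutation[OF perm] by auto
    show "orbit s u \<subseteq> C" unfolding orbit_altdef_permutation[OF perm]
    proof safe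
      fix m show "(s ^^ m) u \<in> C"
      proof (induct m)
        case 0 then show ?case using uC by simp
      next
        case (Suc m)
        have "(s ^^ Suc m) u = s ((s ^^ m) u)" by simp
        also have "\<dots> \<in> s ` C" using Suc by blast
        finally show ?case using inv C_def by simp
      qed
    qed
  qed
  show ?thesis
  proof (cases "j = 0")
    case True
    then have "s u = u" using j by simp
    then have "orbit s u = {u}" by (simp add: orbit_eq_singleton_iff)
    then show ?thesis using CO C_def by simp
  next
    case False
    define q where "q = 2*j - 1"
    have "s ((s ^^ q) u) = s u" using j False unfolding q_def
      by (metis Suc_diff_1 comp_apply funpow.simps(2) mult_pos_pos neq0_conv zero_less_numeral)
    then have qu: "(s ^^ q) u = u" using sinj by (simp add: inj_eq)
    have qpos: "q > 0" "odd q" using False unfolding q_def by auto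
    define p where "p = funpow_dist1 s u u"
    have uo: "u \<in> orbit s u" using perm by (rule permutation_self_in_orbit)
    have pu: "(s ^^ p) u = u" unfolding p_def using uo by (rule funpow_dist1_prop)
    have cardO: "card (orbit s u) = p"
      using orbit_conv_funpow_dist1[OF uo] inj_on_funpow_dist1[OF uo] unfolding p_def
      by (simp add: card_image)
    have "q mod p = 0"
    proof (rule ccontr)
      assume "q mod p \<noteq> 0"
      then have "0 < q mod p" "q mod p < p" unfolding p_def by auto
      moreover have "(s ^^ (q mod p)) u = u" using funpow_mod_eq[OF pu] qu by simp
      ultimately show False using funpow_dist1_least[of "q mod p" s u u] unfolding p_def by auto
    qed
    then have "p dvd q" by auto
    then have "odd p" using qpos by auto
    then show ?thesis using CO cardO C_def by simp
  qed
qed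

lemma even_card_involution:
  assumes "finite A" "\<And>x. x \<in> A \<Longrightarrow> f x \<in> A" "\<And>x. x \<in> A \<Longrightarrow> f (f x) = x"
    "\<And>x. x \<in> A \<Longrightarrow> f x \<noteq> x"
  shows "even (card A)"
  using assms
proof (induction "card A" arbitrary: A rule: less_induct)
  case less
  show ?case
  proof (cases "A = {}")
    case True then show ?thesis by simp
  next
    case False
    then obtain x where x: "x \<in> A" by blast
    define A' where "A' = A - {x, f x}"
    have fx: "f x \<in> A" "f x \<noteq> x" using less x by auto
    have c2: "card {x, f x} = 2" using fx by simp
    have "card {x, f x} \<le> card A" using less(2) x fx by (intro card_mono) auto
    then have cA: "card A = card A' + 2" unfolding A'_def using less(2) x fx c2
      by (subst card_Diff_subset) auto
    have "even (card A')"
    proof (rule less(1))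
      show "card A' < card A" using cA by simp
      show "finite A'" using less(2) A'_def by simp
      fix y assume y: "y \<in> A'"
      have yA: "y \<in> A" "y \<noteq> x" "y \<noteq> f x" using y unfolding A'_def by auto
      have "f y \<in> A" "f (f y) = y" "f y \<noteq> y" "f (f x) = x" using less.prems yA x by auto
      then show "f y \<in> A'" "f (f y) = y" "f y \<noteq> y" unfolding A'_def using yA by auto
    qed
    then show ?thesis using cA by simp
  qed
qed

lemma inG_perm: "in_G r n g \<Longrightarrow> snd g permutes {0..<n}" by (simp add: in_G_def)

lemma sq_snd: "snd (gmult r n g h) = snd g \<circ> snd h" by (simp add: gmult_def)

lemma sq_fst_shift:
  assumes g: "in_G r n g" and x: "x < n"
  shows "fst (gmult r n g (gbar r n g)) (snd g x) = (fst g (snd g x) + (r - fst g x) mod r) mod r"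
proof -
  have p: "snd g permutes {0..<n}" using g by (simp add: in_G_def)
  have "snd g x < n" using permutes_in_image[OF p] x by simp
  moreover have "inv (snd g) (snd g x) = x" using permutes_inverses(2)[OF p] .
  ultimately show ?thesis using x by (simp add: gmult_def gbar_def)
qed

lemma term_mod:
  assumes "b < r"
  shows "int ((a + (r - b) mod r) mod r) mod int r = (int a - int b) mod int r"
proof -
  have "int ((a + (r - b) mod r) mod r) = (int a + (int r - int b) mod int r) mod int r"
    using assms by (simp add: of_nat_mod of_nat_diff)
  then show ?thesis by (simp add: mod_simps)
qed

lemma W_cong:
  assumes r: "0 < r" and g: "in_G r n g" and D: "D \<subseteq> {0..<n}"
  shows "int (\<Sum>i\<in>snd g ` D. fst (gmult r n g (gbar r n g)) i) mod int r =
         (int (\<Sum>i\<in>snd g ` D. fst g i) - int (\<Sum>i\<in>D. fst g i)) mod int r"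
proof -
  let ?H = "gmult r n g (gbar r n g)"
  let ?s = "snd g" and ?z = "fst g"
  have p: "?s permutes {0..<n}" using g by (simp add: in_G_def)
  have inj: "inj_on ?s D" using permutes_inj[OF p] by (auto intro: inj_on_subset)
  have zlt: "\<And>x. x \<in> D \<Longrightarrow> ?z x < r" using g D by (auto simp: in_G_def)
  have "int (\<Sum>i\<in>?s ` D. fst ?H i) = (\<Sum>x\<in>D. int (fst ?H (?s x)))"
    by (simp add: sum.reindex[OF inj])
  also have "\<dots> mod int r = (\<Sum>x\<in>D. int (fst ?H (?s x)) mod int r) mod int r"
    by (simp add: mod_sum_eq)
  also have "(\<Sum>x\<in>D. int (fst ?H (?s x)) mod int r) = (\<Sum>x\<in>D. (int (?z (?s x)) - int (?z x)) mod int r)"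
    using D zlt by (intro sum.cong refl) (auto simp: sq_fst_shift[OF g] term_mod)
  also have "(\<Sum>x\<in>D. (int (?z (?s x)) - int (?z x)) mod int r) mod int r
      = (\<Sum>x\<in>D. (int (?z (?s x)) - int (?z x))) mod int r"
    by (simp add: mod_sum_eq)
  also have "(\<Sum>x\<in>D. (int (?z (?s x)) - int (?z x))) = int (\<Sum>i\<in>?s ` D. ?z i) - int (\<Sum>i\<in>D. ?z i)"
    by (simp add: sum.reindex[OF inj] sum_subtractf)
  finally show ?thesis .
qed

lemma cycle_of_subset:
  assumes p: "s permutes S" and u: "u \<in> S"
  shows "cycle_of (s \<circ> s) u \<subseteq> S"
proof -
  have "((s \<circ> s) ^^ k) u \<in> S" for k
    by (induct k) (auto simp: u permutes_in_image[OF p])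
  then show ?thesis unfolding cycle_of_def by auto
qed

lemma cycle_of_finite_perm: "s permutes {0..<n} \<Longrightarrow> u < n \<Longrightarrow> finite (cycle_of (s \<circ> s) u)"
  using cycle_of_subset[of s "{0..<n}" u] by (auto intro: finite_subset)

lemma count_ct: "count (cycle_type r n h j) k = card {C \<in> cycles_of n (snd h). cycle_color r h C = j \<and> card C = k}"
  unfolding cycle_type_def
  by (subst count_image_mset_eq_card_vimage) (auto simp: cycles_of_def intro: arg_cong[where f=card])

lemma forward:
  assumes r: "0 < r" and g: "in_G r n g"
  defines "H \<equiv> gmult r n g (gbar r n g)"
  defines "lam \<equiv> cycle_type r n H"
  shows "(\<forall>k. even k \<longrightarrow> even (count (lam 0) k)) \<and>
      (\<forall>t. 1 \<le> t \<and> 2 * t < r \<longrightarrow> lam t = lam (r - t)) \<and>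
      (even r \<longrightarrow> (\<forall>k. even (count (lam (r div 2)) k)))"
proof -
  define s where "s = snd g"
  have p: "s permutes {0..<n}" using g by (simp add: in_G_def s_def)
  have perm: "permutation (s \<circ> s)" using p by (intro permutes_imp_permutation[of "{0..<n}"] permutes_compose) auto
  have permS: "permutation s" using p by (intro permutes_imp_permutation[of "{0..<n}"]) auto
  have sH: "snd H = s \<circ> s" by (simp add: H_def sq_snd s_def gmult_def gbar_def)
  define Cyc where "Cyc = cycles_of n (s \<circ> s)"
  define col where "col = cycle_color r H"
  have colr: "col C < r" for C using r by (simp add: col_def cycle_color_def)
  have cnt: "count (lam j) k = card {C \<in> Cyc. col C = j \<and> card C = k}" for j k
    unfolding lam_def count_ct Cyc_def col_def sH ..
  have CycE: "\<exists>u<n. C = cycle_of (s \<circ> s) u" if "C \<in> Cyc" for C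
    using that unfolding Cyc_def cycles_of_def by auto
  have sub: "C \<subseteq> {0..<n}" if "C \<in> Cyc" for C
    using CycE[OF that] cycle_of_subset[OF p] by auto
  have F1: "s ` C \<in> Cyc" "card (s ` C) = card C" "s ` (s ` C) = C" if C: "C \<in> Cyc" for C
  proof -
    obtain u where u: "u < n" "C = cycle_of (s \<circ> s) u" using CycE[OF C] by blast
    have "s u < n" using permutes_in_image[OF p] u by simp
    then show "s ` C \<in> Cyc" unfolding Cyc_def cycles_of_def u cycle_of_image_comm by auto
    show "card (s ` C) = card C" using permutes_inj[OF p] by (simp add: card_image inj_on_subset)
    show "s ` (s ` C) = C" using perm_image_cycle[OF perm] u by (simp add: image_comp)
  qed
  have W: "int (\<Sum>i\<in>C. fst H i) mod int r = (int (\<Sum>i\<in>C. fst g i) - int (\<Sum>i\<in>s ` C. fst g i)) mod int r"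
    if C: "C \<in> Cyc" for C
  proof -
    have "s ` C \<subseteq> {0..<n}" using sub F1 C by auto
    from W_cong[OF r g this] show ?thesis using F1(3)[OF C] by (simp add: H_def s_def)
  qed
  have colint: "int (col C) = int (\<Sum>i\<in>C. fst H i) mod int r" for C
    by (simp add: col_def cycle_color_def of_nat_mod)
  have F2: "(col C + col (s ` C)) mod r = 0" if C: "C \<in> Cyc" for C
  proof -
    have "int (col C + col (s ` C)) mod int r = (int (col C) + int (col (s ` C))) mod int r" by simp
    also have "\<dots> = (int (\<Sum>i\<in>C. fst H i) mod int r + int (\<Sum>i\<in>s ` C. fst H i) mod int r) mod int r"
      by (simp add: colint)
    also have "\<dots> = ((int (\<Sum>i\<in>C. fst g i) - int (\<Sum>i\<in>s ` C. fst g i)) mod int r +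
         (int (\<Sum>i\<in>s ` C. fst g i) - int (\<Sum>i\<in>s ` (s ` C). fst g i)) mod int r) mod int r"
      using W[OF C] W[OF F1(1)[OF C]] by simp
    also have "\<dots> = 0" using F1(3)[OF C] by (simp add: mod_simps)
    finally show ?thesis by (metis of_nat_0 of_nat_mod of_nat_eq_iff)
  qed
  have F3: "col C = 0" "odd (card C)" if C: "C \<in> Cyc" and fx: "s ` C = C" for C
  proof -
    have "int (col C) = 0" using colint[of C] W[OF C] fx by simp
    then show "col C = 0" by simp
    obtain u where u: "u < n" "C = cycle_of (s \<circ> s) u" using CycE[OF C] by blast
    show "odd (card C)" using odd_card_inv_cycle[OF permS] fx u by simp
  qed
  have partner: "col (s ` C) = (r - col C) mod r" if C: "C \<in> Cyc" for C
  proof -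
    have a: "col C < r" "col (s ` C) < r" by (rule colr)+
    show ?thesis
    proof (cases "col C = 0")
      case True then show ?thesis using F2[OF C] a by simp
    next
      case False
      have "r dvd (col C + col (s ` C))" using F2[OF C] by (simp add: mod_eq_0_iff_dvd)
      then obtain q where q: "col C + col (s ` C) = r * q" by (auto elim: dvdE)
      have "r * q < r * 2" using a q by linarith
      then have "q < 2" by simp
      moreover have "q \<noteq> 0"
      proof
        assume "q = 0" with q have "col C + col (s ` C) = 0" by simp
        with False show False by simp
      qed
      ultimately have "q = 1" by linarith
      then have "col C + col (s ` C) = r" using q by simp
      then show ?thesis using a by auto
    qed
  qed
  have finCyc: "finite Cyc" by (simp add: Cyc_def cycles_of_def)
  show ?thesis
  proof (intro conjI allI impI)
    fix k :: nat assume k: "even k"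
    show "even (count (lam 0) k)" unfolding cnt
    proof (rule even_card_involution[where f="image s"])
      show "finite {C \<in> Cyc. col C = 0 \<and> card C = k}" using finCyc by simp
      fix C assume "C \<in> {C \<in> Cyc. col C = 0 \<and> card C = k}"
      then have C: "C \<in> Cyc" "col C = 0" "card C = k" by auto
      show "s ` C \<in> {C \<in> Cyc. col C = 0 \<and> card C = k}" using C F1 partner by auto
      show "s ` s ` C = C" using C F1 by auto
      show "s ` C \<noteq> C" using C F3 k by auto
    qed
  next
    fix t assume t: "1 \<le> t \<and> 2 * t < r"
    show "lam t = lam (r - t)"
    proof (rule multiset_eqI)
      fix k
      have "bij_betw (image s) {C \<in> Cyc. col C = t \<and> card C = k} {C \<in> Cyc. col C = r - t \<and> card C = k}"
      proof (rule bij_betw_byWitness[where f'="image s"])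
        show "\<forall>a\<in>{C \<in> Cyc. col C = t \<and> card C = k}. s ` s ` a = a" using F1 by auto
        show "\<forall>a\<in>{C \<in> Cyc. col C = r - t \<and> card C = k}. s ` s ` a = a" using F1 by auto
        show "image s ` {C \<in> Cyc. col C = t \<and> card C = k} \<subseteq> {C \<in> Cyc. col C = r - t \<and> card C = k}"
          using F1 partner t by auto
        show "image s ` {C \<in> Cyc. col C = r - t \<and> card C = k} \<subseteq> {C \<in> Cyc. col C = t \<and> card C = k}"
          using F1 partner t by auto
      qed
      then show "count (lam t) k = count (lam (r - t)) k" unfolding cnt by (rule bij_betw_same_card)
    qed
  next
    fix k assume ev: "even r"
    let ?t = "r div 2"
    have t: "?t \<noteq> 0" "(r - ?t) mod r = ?t" using ev r by auto
    show "even (count (lam ?t) k)" unfolding cnt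
    proof (rule even_card_involution[where f="image s"])
      show "finite {C \<in> Cyc. col C = ?t \<and> card C = k}" using finCyc by simp
      fix C assume "C \<in> {C \<in> Cyc. col C = ?t \<and> card C = k}"
      then have C: "C \<in> Cyc" "col C = ?t" "card C = k" by auto
      show "s ` C \<in> {C \<in> Cyc. col C = ?t \<and> card C = k}" using C F1 partner t by auto
      show "s ` s ` C = C" using C F1 by auto
      show "s ` C \<noteq> C" using C F3 t by auto
    qed
  qed
qed



definition rot :: "nat \<Rightarrow> nat \<Rightarrow> nat \<Rightarrow> nat" where
  "rot n m i = (if n \<le> i \<and> i < n + m then (if i + 1 = n + m then n else i + 1) else i)"

lemma rot_in: "n \<le> i \<Longrightarrow> i < n + m \<Longrightarrow> n \<le> rot n m i \<and> rot n m i < n + m"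
  by (auto simp: rot_def)

lemma rot_ge: "n \<le> i \<Longrightarrow> n \<le> rot n m i"
  by (auto simp: rot_def)

lemma rot_mod: "a < m \<Longrightarrow> rot n m (n + a) = n + (a + 1) mod m"
  by (auto simp: rot_def)

lemma rot_permutes:
  assumes "0 < m" shows "rot n m permutes {n..<n+m}"
proof (rule bij_imp_permutes)
  have inj: "inj_on (rot n m) {n..<n+m}"
    by (auto simp: inj_on_def rot_def split: if_splits)
  have "rot n m ` {n..<n+m} \<subseteq> {n..<n+m}" using rot_in by auto
  then have "rot n m ` {n..<n+m} = {n..<n+m}" using inj by (intro endo_inj_surj) auto
  then show "bij_betw (rot n m) {n..<n+m} {n..<n+m}" using inj by (simp add: bij_betw_def)
  show "\<And>x. x \<notin> {n..<n + m} \<Longrightarrow> rot n m x = x" by (auto simp: rot_def)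
qed

lemma funpow_agree:
  assumes "\<And>i. i \<in> S \<Longrightarrow> f i = h i \<and> h i \<in> S" and "u \<in> S"
  shows "(f ^^ k) u = (h ^^ k) u \<and> (h ^^ k) u \<in> S"
  by (induct k) (use assms in auto)

lemma rot2_iter: "a < m \<Longrightarrow> ((rot n m \<circ> rot n m) ^^ k) (n + a) = n + (a + 2 * k) mod m"
proof (induct k)
  case 0 then show ?case by simp
next
  case (Suc k)
  have m: "0 < m" using Suc by simp
  have "((rot n m \<circ> rot n m) ^^ Suc k) (n + a) = rot n m (rot n m (((rot n m \<circ> rot n m) ^^ k) (n + a)))"
    by simp
  also have "\<dots> = rot n m (rot n m (n + (a + 2 * k) mod m))"
    by (simp only: Suc.hyps[OF Suc.prems])
  also have "\<dots> = n + (((a + 2 * k) mod m + 1) mod m + 1) mod m"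
    using m by (simp add: rot_mod)
  also have "\<dots> = n + (a + 2 * Suc k) mod m" by (simp add: mod_simps)
  finally show ?case .
qed

lemma orbit_odd:
  assumes "odd m" "a < m"
  shows "cycle_of (rot n m \<circ> rot n m) (n + a) = {n..<n+m}"
proof
  show "cycle_of (rot n m \<circ> rot n m) (n + a) \<subseteq> {n..<n+m}"
    unfolding cycle_of_def using assms by (auto simp: rot2_iter)
  show "{n..<n+m} \<subseteq> cycle_of (rot n m \<circ> rot n m) (n + a)"
  proof
    fix i assume i: "i \<in> {n..<n+m}"
    define x where "x = i - n"
    define y where "y = x + m - a"
    define j where "j = y * ((m + 1) div 2)"
    have x: "x < m" "i = n + x" using i unfolding x_def by auto
    have h: "2 * ((m + 1) div 2) = m + 1" using assms by simp
    have e1: "a + 2 * j = a + y + y * m"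
    proof -
      have "2 * j = y * (2 * ((m + 1) div 2))" unfolding j_def by simp
      also have "\<dots> = y * m + y" using h by simp
      finally show ?thesis by simp
    qed
    have "a + y = x + m" unfolding y_def using assms by simp
    then have "a + 2 * j = x + (1 + y) * m" using e1 by simp
    then have "(a + 2 * j) mod m = (x + m * (1 + y)) mod m" by (simp add: mult.commute)
    also have "\<dots> = x mod m" by (rule mod_mult_self2)
    also have "\<dots> = x" using x by simp
    finally have "(a + 2 * j) mod m = x" .
    then have "((rot n m \<circ> rot n m) ^^ j) (n + a) = i" using assms x by (simp add: rot2_iter)
    then show "i \<in> cycle_of (rot n m \<circ> rot n m) (n + a)" unfolding cycle_of_def by blast
  qed
qed

lemma orbit_even:
  assumes "m = 2 * k" "a < m"
  shows "cycle_of (rot n m \<circ> rot n m) (n + a) = {i. n \<le> i \<and> i < n + m \<and> (even (i - n) \<longleftrightarrow> even a)}"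
proof
  show "cycle_of (rot n m \<circ> rot n m) (n + a) \<subseteq> {i. n \<le> i \<and> i < n + m \<and> (even (i - n) \<longleftrightarrow> even a)}"
  proof
    fix i assume "i \<in> cycle_of (rot n m \<circ> rot n m) (n + a)"
    then obtain j where j: "i = n + (a + 2 * j) mod m" unfolding cycle_of_def using assms by (auto simp: rot2_iter)
    have "(a + 2 * j) mod m mod 2 = (a + 2 * j) mod 2" using assms by (simp add: mod_mod_cancel)
    then have "even ((a + 2 * j) mod m) \<longleftrightarrow> even (a + 2 * j)" by (simp add: even_iff_mod_2_eq_zero)
    then show "i \<in> {i. n \<le> i \<and> i < n + m \<and> (even (i - n) \<longleftrightarrow> even a)}" using j assms by auto
  qed
  show "{i. n \<le> i \<and> i < n + m \<and> (even (i - n) \<longleftrightarrow> even a)} \<subseteq> cycle_of (rot n m \<circ> rot n m) (n + a)"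
  proof
    fix i assume i: "i \<in> {i. n \<le> i \<and> i < n + m \<and> (even (i - n) \<longleftrightarrow> even a)}"
    define x where "x = i - n"
    have x: "x < m" "i = n + x" "even x \<longleftrightarrow> even a" using i unfolding x_def by auto
    define j where "j = (x + m - a) div 2"
    have "even (x + m - a)" using x assms by auto
    then have "a + 2 * j = x + m" unfolding j_def using assms by auto
    then have "(a + 2 * j) mod m = x" using x by simp
    then have "((rot n m \<circ> rot n m) ^^ j) (n + a) = i" using assms x by (simp add: rot2_iter)
    then show "i \<in> cycle_of (rot n m \<circ> rot n m) (n + a)" unfolding cycle_of_def by blast
  qed
qed



definition sqg :: "nat \<Rightarrow> nat \<Rightarrow> gelt \<Rightarrow> gelt" where
  "sqg r n g = gmult r n g (gbar r n g)"

definition ext :: "nat \<Rightarrow> nat \<Rightarrow> (nat \<Rightarrow> nat) \<Rightarrow> gelt \<Rightarrow> gelt" where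
  "ext n m c g = ((\<lambda>i. if i < n then fst g i else if i < n + m then c i else 0),
                  (\<lambda>i. if i < n then snd g i else rot n m i))"

lemma ext_snd:
  assumes g: "in_G r n g" shows "snd (ext n m c g) = snd g \<circ> rot n m"
proof
  fix i
  have p: "snd g permutes {0..<n}" using g by (simp add: in_G_def)
  show "snd (ext n m c g) i = (snd g \<circ> rot n m) i"
  proof (cases "i < n")
    case True then show ?thesis by (simp add: ext_def rot_def)
  next
    case False
    then have "n \<le> rot n m i" by (simp add: rot_ge)
    then have "snd g (rot n m i) = rot n m i" using permutes_not_in[OF p] by simp
    then show ?thesis using False by (simp add: ext_def)
  qed
qed

lemma ext_inG:
  assumes g: "in_G r n g" and m: "0 < m" and c: "\<And>i. n \<le> i \<Longrightarrow> i < n + m \<Longrightarrow> c i < r"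
  shows "in_G r (n + m) (ext n m c g)"
proof -
  have p: "snd g permutes {0..<n}" using g by (simp add: in_G_def)
  have "snd g permutes {0..<n+m}" by (rule permutes_subset[OF p]) auto
  moreover have "rot n m permutes {0..<n+m}" by (rule permutes_subset[OF rot_permutes[OF m]]) auto
  ultimately have "snd g \<circ> rot n m permutes {0..<n+m}" by (rule permutes_compose[rotated])
  then show ?thesis using g c unfolding in_G_def ext_snd[OF g] by (auto simp: ext_def)
qed

lemma ext_fst_block:
  assumes g: "in_G r n g" and m: "0 < m" and c: "\<And>i. n \<le> i \<Longrightarrow> i < n + m \<Longrightarrow> c i < r"
    and x: "n \<le> x" "x < n + m"
  shows "fst (sqg r (n+m) (ext n m c g)) (rot n m x) = (c (rot n m x) + (r - c x) mod r) mod r"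
proof -
  have g': "in_G r (n + m) (ext n m c g)" by (rule ext_inG[OF g m c])
  have s: "snd (ext n m c g) x = rot n m x" using x by (simp add: ext_def)
  have "n \<le> rot n m x" "rot n m x < n + m" using rot_in x by auto
  then show ?thesis using sq_fst_shift[OF g', of x] x s unfolding sqg_def by (simp add: ext_def)
qed

lemma ext_ct:
  assumes g: "in_G r n g" and m: "0 < m" and c: "\<And>i. n \<le> i \<Longrightarrow> i < n + m \<Longrightarrow> c i < r"
  shows "cycle_type r (n+m) (sqg r (n+m) (ext n m c g)) j = cycle_type r n (sqg r n g) j +
    image_mset card (mset_set {C \<in> cycle_of (rot n m \<circ> rot n m) ` {n..<n+m}.
        cycle_color r (sqg r (n+m) (ext n m c g)) C = j})"
proof -
  define g' where "g' = ext n m c g"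
  define H' where "H' = sqg r (n+m) g'"
  define H where "H = sqg r n g"
  define s where "s = snd g"
  define s' where "s' = snd g'"
  have p: "s permutes {0..<n}" using g by (simp add: in_G_def s_def)
  have g': "in_G r (n + m) g'" unfolding g'_def by (rule ext_inG[OF g m c])
  have s': "s' = s \<circ> rot n m" unfolding s'_def s_def g'_def by (rule ext_snd[OF g])
  have sH': "snd H' = s' \<circ> s'" by (simp add: H'_def sqg_def sq_snd s'_def gmult_def gbar_def)
  have sH: "snd H = s \<circ> s" by (simp add: H_def sqg_def sq_snd s_def gmult_def gbar_def)
  have rotlow: "rot n m i = i" if "i < n" for i using that by (simp add: rot_def)
  have P1: "cycle_of (s' \<circ> s') u = cycle_of (s \<circ> s) u" if u: "u < n" for u
  proof -
    have "((s' \<circ> s') ^^ k) u = ((s \<circ> s) ^^ k) u \<and> ((s \<circ> s) ^^ k) u \<in> {0..<n}" for k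
    proof (rule funpow_agree)
      fix i assume "i \<in> {0..<n}"
      then show "(s' \<circ> s') i = (s \<circ> s) i \<and> (s \<circ> s) i \<in> {0..<n}"
        using permutes_in_image[OF p] by (simp add: s' rotlow)
    qed (use u in simp)
    then show ?thesis unfolding cycle_of_def by simp
  qed
  have P2: "cycle_of (s' \<circ> s') u = cycle_of (rot n m \<circ> rot n m) u" if u: "n \<le> u" for u
  proof -
    have "((s' \<circ> s') ^^ k) u = ((rot n m \<circ> rot n m) ^^ k) u \<and> ((rot n m \<circ> rot n m) ^^ k) u \<in> {n..}" for k
    proof (rule funpow_agree)
      fix i assume i: "i \<in> {n..}"
      have a: "n \<le> rot n m i" "n \<le> rot n m (rot n m i)" using i rot_ge by auto
      then have "s (rot n m i) = rot n m i" "s (rot n m (rot n m i)) = rot n m (rot n m i)"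
        using permutes_not_in[OF p] by auto
      then show "(s' \<circ> s') i = (rot n m \<circ> rot n m) i \<and> (rot n m \<circ> rot n m) i \<in> {n..}"
        using a by (simp add: s')
    qed (use u in simp)
    then show ?thesis unfolding cycle_of_def by simp
  qed
  have P3: "fst H' i = fst H i" if i: "i < n" for i
  proof -
    define x where "x = inv s i"
    have x: "x < n" "s x = i" using permutes_inverses[OF p] permutes_in_image[OF permutes_inv[OF p]] i
      unfolding x_def by auto
    have s'x: "s' x = s x" using x by (simp add: s' rotlow)
    have "fst H' (s' x) = (fst g' (s' x) + (r - fst g' x) mod r) mod r"
      using sq_fst_shift[OF g', of x] x unfolding H'_def sqg_def s'_def by simp
    also have "\<dots> = (fst g (s x) + (r - fst g x) mod r) mod r"
      using x s'x i by (simp add: g'_def ext_def)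
    also have "\<dots> = fst H (s x)" using sq_fst_shift[OF g x(1)] unfolding H_def sqg_def s_def by simp
    finally show ?thesis using x s'x by simp
  qed
  define A where "A = cycle_of (s \<circ> s) ` {0..<n}"
  define B where "B = cycle_of (rot n m \<circ> rot n m) ` {n..<n+m}"
  have cyc': "cycles_of (n + m) (snd H') = A \<union> B"
  proof -
    have "{0..<n+m} = {0..<n} \<union> {n..<n+m}" by auto
    then have "cycles_of (n + m) (snd H') = cycle_of (s' \<circ> s') ` {0..<n} \<union> cycle_of (s' \<circ> s') ` {n..<n+m}"
      unfolding cycles_of_def sH' by (simp add: image_Un)
    also have "\<dots> = A \<union> B" unfolding A_def B_def using P1 P2 by (auto intro!: image_cong)
    finally show ?thesis .
  qed
  have cyc: "cycles_of n (snd H) = A" unfolding cycles_of_def sH A_def ..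
  have Asub: "C \<subseteq> {0..<n}" if "C \<in> A" for C
    using that cycle_of_subset[OF p] unfolding A_def by fastforce
  have Bmem: "\<exists>u\<in>C. n \<le> u" if CB: "C \<in> B" for C
  proof -
    obtain u where u: "u \<in> {n..<n+m}" "C = cycle_of (rot n m \<circ> rot n m) u" using CB unfolding B_def by auto
    have "u \<in> C" unfolding u cycle_of_def by (auto intro!: exI[of _ 0])
    then show ?thesis using u by auto
  qed
  have colA: "cycle_color r H' C = cycle_color r H C" if "C \<in> A" for C
    using Asub[OF that] P3 unfolding cycle_color_def by (intro arg_cong[where f="\<lambda>x. x mod r"] sum.cong) auto
  have eq: "{C \<in> A \<union> B. cycle_color r H' C = j} = {C \<in> A. cycle_color r H C = j} \<union> {C \<in> B. cycle_color r H' C = j}"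
    using colA by auto
  have disj: "{C \<in> A. cycle_color r H C = j} \<inter> {C \<in> B. cycle_color r H' C = j} = {}"
    using Asub Bmem by fastforce
  have fin: "finite A" "finite B" unfolding A_def B_def by auto
  show ?thesis
    unfolding g'_def[symmetric] H'_def[symmetric] H_def[symmetric] B_def[symmetric]
    unfolding cycle_type_def cyc cyc' eq
    by (subst mset_set_Union) (use fin disj in auto)
qed



lemma ach_odd:
  assumes r: "0 < r" and g: "in_G r n g" and m: "odd m"
  shows "in_G r (n+m) (ext n m (\<lambda>_. 0) g) \<and>
    (\<forall>j. cycle_type r (n+m) (sqg r (n+m) (ext n m (\<lambda>_. 0) g)) j =
         cycle_type r n (sqg r n g) j + (if j = 0 then {#m#} else {#}))"
proof -
  have m0: "0 < m" using m by (cases m) auto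
  have c: "\<And>i. n \<le> i \<Longrightarrow> i < n + m \<Longrightarrow> (\<lambda>_. 0::nat) i < r" using r by simp
  define H' where "H' = sqg r (n+m) (ext n m (\<lambda>_. 0) g)"
  have B: "cycle_of (rot n m \<circ> rot n m) ` {n..<n+m} = {{n..<n+m}}"
  proof -
    have "cycle_of (rot n m \<circ> rot n m) u = {n..<n+m}" if "u \<in> {n..<n+m}" for u
    proof -
      have "u - n < m" "n + (u - n) = u" using that by auto
      then show ?thesis using orbit_odd[OF m, of "u - n" n] by simp
    qed
    then have "cycle_of (rot n m \<circ> rot n m) ` {n..<n+m} = (\<lambda>_. {n..<n+m}) ` {n..<n+m}"
      by (intro image_cong) auto
    moreover have "{n..<n+m} \<noteq> {}" using m0 by simp
    ultimately show ?thesis by (simp only: image_constant_conv) simp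
  qed
  have rp: "rot n m permutes {n..<n+m}" by (rule rot_permutes[OF m0])
  have "(\<Sum>i\<in>{n..<n+m}. fst H' i) = (\<Sum>i\<in>rot n m ` {n..<n+m}. fst H' i)"
    using permutes_image[OF rp] by simp
  also have "\<dots> = (\<Sum>x\<in>{n..<n+m}. fst H' (rot n m x))"
    by (rule sum.reindex[OF permutes_inj_on[OF rp], unfolded comp_def])
  also have "\<dots> = 0"
    using ext_fst_block[OF g m0 c] unfolding H'_def by simp
  finally have col: "cycle_color r H' {n..<n+m} = 0" by (simp add: cycle_color_def)
  have "{C \<in> {{n..<n+m}}. cycle_color r H' C = j} = (if j = 0 then {{n..<n+m}} else {})" for j
    using col by auto
  then show ?thesis
    using ext_inG[OF g m0 c] ext_ct[OF g m0 c] unfolding H'_def[symmetric] B by simp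
qed


lemma ach_even:
  assumes r: "0 < r" and g: "in_G r n g" and k: "0 < k" and t: "t < r"
  shows "in_G r (n + 2*k) (ext n (2*k) (\<lambda>i. if i = n then t else 0) g) \<and>
    (\<forall>j. cycle_type r (n + 2*k) (sqg r (n + 2*k) (ext n (2*k) (\<lambda>i. if i = n then t else 0) g)) j =
         cycle_type r n (sqg r n g) j + ((if j = t then {#k#} else {#}) + (if j = (r - t) mod r then {#k#} else {#})))"
proof -
  define m where "m = 2 * k"
  define c where "c = (\<lambda>i. if i = n then t else (0::nat))"
  have m0: "0 < m" "2 \<le> m" using k by (auto simp: m_def)
  have cr: "\<And>i. n \<le> i \<Longrightarrow> i < n + m \<Longrightarrow> c i < r" using r t by (simp add: c_def)
  define H' where "H' = sqg r (n+m) (ext n m c g)"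
  define E where "E = {i. n \<le> i \<and> i < n + m \<and> even (i - n)}"
  define Od where "Od = {i. n \<le> i \<and> i < n + m \<and> odd (i - n)}"
  have B: "cycle_of (rot n m \<circ> rot n m) ` {n..<n+m} = {E, Od}"
  proof -
    have cy: "cycle_of (rot n m \<circ> rot n m) u = (if even (u - n) then E else Od)" if "u \<in> {n..<n+m}" for u
    proof -
      have "u - n < m" "n + (u - n) = u" using that by auto
      then have "cycle_of (rot n m \<circ> rot n m) u = {i. n \<le> i \<and> i < n + m \<and> (even (i - n) \<longleftrightarrow> even (u - n))}"
        using orbit_even[OF m_def, of "u - n" n] by simp
      then show ?thesis unfolding E_def Od_def by auto
    qed
    have "n \<in> {n..<n+m}" "n + 1 \<in> {n..<n+m}" using m0 by auto
    note nn = this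
    have "E = cycle_of (rot n m \<circ> rot n m) n" using cy[OF nn(1)] by simp
    moreover have "Od = cycle_of (rot n m \<circ> rot n m) (n + 1)" using cy[OF nn(2)] by simp
    ultimately have "{E, Od} \<subseteq> cycle_of (rot n m \<circ> rot n m) ` {n..<n+m}" using nn by blast
    moreover have "cycle_of (rot n m \<circ> rot n m) ` {n..<n+m} \<subseteq> {E, Od}" using cy by auto
    ultimately show ?thesis by blast
  qed
  have EO: "E \<noteq> Od" "n \<in> E" "n \<notin> Od" "n + 1 \<in> Od" "n + 1 \<notin> E"
  proof -
    show "n \<in> E" using m0 by (simp add: E_def)
    show "n \<notin> Od" by (simp add: Od_def)
    show "n + 1 \<in> Od" using m0 by (simp add: Od_def)
    show "n + 1 \<notin> E" by (simp add: E_def)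
    show "E \<noteq> Od" using \<open>n \<in> E\<close> \<open>n \<notin> Od\<close> by blast
  qed
  have val: "fst H' i = (if i = n then t else if i = n + 1 then (r - t) mod r else 0)"
    if i: "n \<le> i" "i < n + m" for i
  proof (cases "i = n")
    case True
    define x where "x = n + m - 1"
    have x: "n \<le> x" "x < n + m" "rot n m x = i" "x \<noteq> n" using i m0 True unfolding x_def by (auto simp: rot_def)
    have "fst H' i = (c i + (r - c x) mod r) mod r"
      using ext_fst_block[where c=c, OF g m0(1) cr x(1,2)] x(3) unfolding H'_def by simp
    also have "\<dots> = t" using True x(4) t by (simp add: c_def)
    finally show ?thesis using True by simp
  next
    case False
    define x where "x = i - 1"
    have x: "n \<le> x" "x < n + m" "rot n m x = i" using i m0 False unfolding x_def by (auto simp: rot_def)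
    have "fst H' i = (c i + (r - c x) mod r) mod r"
      using ext_fst_block[where c=c, OF g m0(1) cr x(1,2)] x(3) unfolding H'_def by simp
    also have "\<dots> = (r - c x) mod r" using False by (simp add: c_def)
    finally show ?thesis using False t unfolding c_def x_def by auto
  qed
  have Esub: "E \<subseteq> {n..<n+m}" and Osub: "Od \<subseteq> {n..<n+m}" by (auto simp: E_def Od_def)
  have finE: "finite E" and finO: "finite Od" using Esub Osub by (auto intro: finite_subset)
  have colE: "cycle_color r H' E = t"
  proof -
    have "(\<Sum>i\<in>E. fst H' i) = (\<Sum>i\<in>E. if i = n then t else 0)"
      using val EO Esub by (intro sum.cong) auto
    also have "\<dots> = t" using EO finE by (simp add: sum.delta)
    finally show ?thesis using t by (simp add: cycle_color_def)
  qed
  have colO: "cycle_color r H' Od = (r - t) mod r"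
  proof -
    have "(\<Sum>i\<in>Od. fst H' i) = (\<Sum>i\<in>Od. if i = n + 1 then (r - t) mod r else 0)"
      using val EO Osub by (intro sum.cong) auto
    also have "\<dots> = (r - t) mod r" using EO finO by (simp add: sum.delta)
    finally show ?thesis by (simp add: cycle_color_def)
  qed
  have cardE: "card E = k"
  proof -
    have "E = (\<lambda>a. n + 2 * a) ` {..<k}"
    proof
      show "E \<subseteq> (\<lambda>a. n + 2 * a) ` {..<k}"
      proof
        fix i assume "i \<in> E"
        then have "n \<le> i" "i < n + m" "even (i - n)" by (auto simp: E_def)
        then show "i \<in> (\<lambda>a. n + 2 * a) ` {..<k}" unfolding m_def
          by (intro image_eqI[of _ _ "(i - n) div 2"]) auto
      qed
    qed (auto simp: E_def m_def)
    moreover have "inj_on (\<lambda>a. n + 2 * a) {..<k}" by (auto simp: inj_on_def)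
    ultimately show ?thesis by (simp add: card_image)
  qed
  have cardO: "card Od = k"
  proof -
    have "Od = (\<lambda>a. n + 2 * a + 1) ` {..<k}"
    proof
      show "Od \<subseteq> (\<lambda>a. n + 2 * a + 1) ` {..<k}"
      proof
        fix i assume "i \<in> Od"
        then have "n \<le> i" "i < n + m" "odd (i - n)" by (auto simp: Od_def)
        note this
        from \<open>odd (i - n)\<close> obtain a where a: "i - n = 2 * a + 1" by (rule oddE)
        then have "i = n + 2 * a + 1" "a < k" using \<open>n \<le> i\<close> \<open>i < n + m\<close> unfolding m_def by auto
        then show "i \<in> (\<lambda>a. n + 2 * a + 1) ` {..<k}" by auto
      qed
    qed (auto simp: Od_def m_def)
    moreover have "inj_on (\<lambda>a. n + 2 * a + 1) {..<k}" by (auto simp: inj_on_def)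
    ultimately show ?thesis by (simp add: card_image)
  qed
  have fil: "image_mset card (mset_set {C \<in> {E, Od}. cycle_color r H' C = j}) =
      (if j = t then {#k#} else {#}) + (if j = (r - t) mod r then {#k#} else {#})" for j
  proof (cases "j = t"; cases "j = (r - t) mod r")
    assume "j = t" "j = (r - t) mod r"
    then have S1: "{C \<in> {E, Od}. cycle_color r H' C = j} = {E, Od}" using colE colO by auto
    show ?thesis unfolding S1 using EO cardE cardO \<open>j = t\<close> \<open>j = (r - t) mod r\<close> by simp
  next
    assume "j = t" "j \<noteq> (r - t) mod r"
    then have S2: "{C \<in> {E, Od}. cycle_color r H' C = j} = {E}" using colE colO by auto
    show ?thesis unfolding S2 using EO cardE cardO \<open>j = t\<close> \<open>j \<noteq> (r - t) mod r\<close> by simp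
  next
    assume "j \<noteq> t" "j = (r - t) mod r"
    then have S3: "{C \<in> {E, Od}. cycle_color r H' C = j} = {Od}" using colE colO by auto
    show ?thesis unfolding S3 using EO cardE cardO \<open>j \<noteq> t\<close> \<open>j = (r - t) mod r\<close> by simp
  next
    assume "j \<noteq> t" "j \<noteq> (r - t) mod r"
    then have S4: "{C \<in> {E, Od}. cycle_color r H' C = j} = {}" using colE colO by auto
    show ?thesis unfolding S4 using \<open>j \<noteq> t\<close> \<open>j \<noteq> (r - t) mod r\<close> by simp
  qed
  show ?thesis
    using ext_inG[where c=c, OF g m0(1) cr] ext_ct[where c=c, OF g m0(1) cr] fil
    unfolding H'_def[symmetric] B m_def[symmetric] c_def[symmetric] by simp
qed



definition ach :: "nat \<Rightarrow> nat \<Rightarrow> (nat \<Rightarrow> nat multiset) \<Rightarrow> bool" where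
  "ach r n lam \<longleftrightarrow> (\<exists>g. in_G r n g \<and> cycle_type r n (sqg r n g) = lam)"

definition condp :: "nat \<Rightarrow> (nat \<Rightarrow> nat multiset) \<Rightarrow> bool" where
  "condp r lam \<longleftrightarrow> (\<forall>k. even k \<longrightarrow> even (count (lam 0) k)) \<and>
      (\<forall>t. 1 \<le> t \<and> 2 * t < r \<longrightarrow> lam t = lam (r - t)) \<and>
      (even r \<longrightarrow> (\<forall>k. even (count (lam (r div 2)) k)))"

lemma ach0: "ach r 0 (\<lambda>j. {#})"
proof -
  have "in_G r 0 (\<lambda>_. 0, id)" by (simp add: in_G_def permutes_id)
  moreover have "cycle_type r 0 (sqg r 0 (\<lambda>_. 0, id)) = (\<lambda>j. {#})"
    by (simp add: cycle_type_def cycles_of_def fun_eq_iff)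
  ultimately show ?thesis unfolding ach_def by blast
qed

lemma ach_odd':
  assumes "ach r n mu" "0 < r" "odd m"
  shows "ach r (n + m) (\<lambda>j. mu j + (if j = 0 then {#m#} else {#}))"
proof -
  obtain g where g: "in_G r n g" "cycle_type r n (sqg r n g) = mu" using assms(1) unfolding ach_def by blast
  let ?g = "ext n m (\<lambda>_. 0) g"
  have h: "in_G r (n+m) ?g" "\<And>j. cycle_type r (n+m) (sqg r (n+m) ?g) j = mu j + (if j = 0 then {#m#} else {#})"
    using ach_odd[OF assms(2) g(1) assms(3)] g(2) by auto
  have "cycle_type r (n+m) (sqg r (n+m) ?g) = (\<lambda>j. mu j + (if j = 0 then {#m#} else {#}))"
    using h(2) by (rule ext)
  then show ?thesis unfolding ach_def using h(1) by blast
qed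

lemma ach_even':
  assumes "ach r n mu" "0 < r" "0 < k" "t < r"
  shows "ach r (n + 2 * k) (\<lambda>j. mu j + ((if j = t then {#k#} else {#}) + (if j = (r - t) mod r then {#k#} else {#})))"
proof -
  obtain g where g: "in_G r n g" "cycle_type r n (sqg r n g) = mu" using assms(1) unfolding ach_def by blast
  let ?g = "ext n (2*k) (\<lambda>i. if i = n then t else 0) g"
  have h: "in_G r (n+2*k) ?g" "\<And>j. cycle_type r (n+2*k) (sqg r (n+2*k) ?g) j = mu j + ((if j = t then {#k#} else {#}) + (if j = (r - t) mod r then {#k#} else {#}))"
    using ach_even[OF assms(2) g(1) assms(3) assms(4)] g(2) by auto
  have "cycle_type r (n+2*k) (sqg r (n+2*k) ?g) = (\<lambda>j. mu j + ((if j = t then {#k#} else {#}) + (if j = (r - t) mod r then {#k#} else {#})))"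
    using h(2) by (rule ext)
  then show ?thesis unfolding ach_def using h(1) by blast
qed

lemma reduce:
  assumes rp: "rpartite_partition r n lam" and Bsub: "\<And>j. B j \<subseteq># lam j"
    and S: "(\<Sum>j<r. sum_mset (B j)) = s"
  shows "rpartite_partition r (n - s) (\<lambda>j. lam j - B j) \<and> s \<le> n \<and> lam = (\<lambda>j. (lam j - B j) + B j)"
proof -
  have eq: "lam = (\<lambda>j. (lam j - B j) + B j)" using Bsub by (simp add: fun_eq_iff subset_mset.diff_add)
  have "(\<Sum>j<r. sum_mset (lam j - B j)) + s = (\<Sum>j<r. sum_mset (lam j - B j) + sum_mset (B j))"
    using S by (simp add: sum.distrib)
  also have "\<dots> = (\<Sum>j<r. sum_mset (lam j))"
    by (intro sum.cong refl) (metis eq sum_mset.union)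
  also have "\<dots> = n" using rp by (simp add: rpartite_partition_def)
  finally have sum: "(\<Sum>j<r. sum_mset (lam j - B j)) + s = n" .
  have "0 \<notin># lam j - B j" for j using rp by (auto simp: rpartite_partition_def dest: in_diffD)
  moreover have "lam j - B j = {#}" if "j \<ge> r" for j using rp that by (simp add: rpartite_partition_def)
  ultimately show ?thesis using sum eq by (auto simp: rpartite_partition_def)
qed



lemma sum_delta_mset: "t < (r::nat) \<Longrightarrow> (\<Sum>j<r. sum_mset (if j = t then {#k#} else {#})) = (k::nat)"
proof -
  assume t: "t < r"
  have "(\<Sum>j<r. sum_mset (if j = t then {#k#} else {#})) = (\<Sum>j<r. if j = t then k else 0)"
    by (intro sum.cong) auto
  also have "\<dots> = k" using t by (simp add: sum.delta)
  finally show ?thesis .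
qed

lemma sum_two_mset:
  assumes "t < (r::nat)" "t' < r"
  shows "(\<Sum>j<r. sum_mset ((if j = t then {#k#} else {#}) + (if j = t' then {#k#} else {#}))) = 2 * (k::nat)"
proof -
  have "(\<Sum>j<r. sum_mset ((if j = t then {#k#} else {#}) + (if j = t' then {#k#} else {#})))
      = (\<Sum>j<r. sum_mset (if j = t then {#k#} else {#})) + (\<Sum>j<r. sum_mset (if j = t' then {#k#} else {#}))"
    by (simp add: sum.distrib)
  also have "\<dots> = 2 * k" using assms by (simp add: sum_delta_mset)
  finally show ?thesis .
qed

lemma backward:
  assumes r: "0 < r"
  shows "rpartite_partition r n lam \<Longrightarrow> condp r lam \<Longrightarrow> ach r n lam"
proof (induction n arbitrary: lam rule: less_induct)
  case (less n lam)
  note rp = less.prems(1) and cd = less.prems(2)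
  have zero: "0 \<notin># lam j" for j using rp by (simp add: rpartite_partition_def)
  have out: "lam j = {#}" if "j \<ge> r" for j using rp that by (simp add: rpartite_partition_def)
  have cd1: "\<And>k. even k \<Longrightarrow> even (count (lam 0) k)"
    and cd2: "\<And>t. 1 \<le> t \<Longrightarrow> 2 * t < r \<Longrightarrow> lam t = lam (r - t)"
    and cd3: "\<And>k. even r \<Longrightarrow> even (count (lam (r div 2)) k)"
    using cd unfolding condp_def by auto
  have step: "ach r n lam"
    if Bsub: "\<And>j. B j \<subseteq># lam j" and S: "(\<Sum>j<r. sum_mset (B j)) = s" and s0: "0 < s"
      and cd': "condp r (\<lambda>j. lam j - B j)"
      and cl: "\<And>mu. ach r (n - s) mu \<Longrightarrow> ach r (n - s + s) (\<lambda>j. mu j + B j)" for B s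
  proof -
    have R: "rpartite_partition r (n - s) (\<lambda>j. lam j - B j) \<and> s \<le> n \<and> lam = (\<lambda>j. (lam j - B j) + B j)"
      by (rule reduce[OF rp Bsub S])
    note red = conjunct1[OF R] conjunct1[OF conjunct2[OF R]] conjunct2[OF conjunct2[OF R]]
    have a1: "ach r (n - s) (\<lambda>j. lam j - B j)"
      using less.IH[OF _ red(1) cd'] s0 red(2) by simp
    have e: "n - s + s = n" using red(2) by simp
    have "ach r n (\<lambda>j. (lam j - B j) + B j)" using cl[OF a1] unfolding e .
    then show ?thesis by (rule ssubst[OF red(3)])
  qed
  show ?case
  proof (cases "\<forall>j<r. lam j = {#}")
    case True
    then have lam0: "lam = (\<lambda>j. {#})" using out by (auto simp: fun_eq_iff not_less[symmetric])
    have "n = 0" using rp True by (simp add: rpartite_partition_def)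
    then show ?thesis using lam0 ach0 by simp
  next
    case False
    then obtain j0 where j0: "j0 < r" "lam j0 \<noteq> {#}" by blast
    show ?thesis
    proof (cases "\<exists>k. odd k \<and> k \<in># lam 0")
      case True
      then obtain k where k: "odd k" "k \<in># lam 0" by blast
      let ?B = "\<lambda>j. if j = 0 then {#k#} else {#}"
      show ?thesis
      proof (rule step[where B = ?B and s = k])
        show "?B j \<subseteq># lam j" for j using k by auto
        show "(\<Sum>j<r. sum_mset (?B j)) = k" using r by (rule sum_delta_mset)
        show "0 < k" using k by (cases k) auto
        show "ach r (n - k + k) (\<lambda>j. mu j + ?B j)" if "ach r (n - k) mu" for mu
          using ach_odd'[OF that r k(1)] .
        show "condp r (\<lambda>j. lam j - ?B j)"
          unfolding condp_def
        proof (intro conjI allI impI)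
          fix x :: nat assume "even x"
          then have "x \<noteq> k" using k by auto
          then show "even (count (lam 0 - ?B 0) x)" using cd1[OF \<open>even x\<close>] by simp
        next
          fix t assume t: "1 \<le> t \<and> 2 * t < r"
          then show "lam t - ?B t = lam (r - t) - ?B (r - t)" using cd2[of t] by simp
        next
          fix x assume "even r"
          then have "r div 2 \<noteq> 0" using r by auto
          then show "even (count (lam (r div 2) - ?B (r div 2)) x)" using cd3[OF \<open>even r\<close>] by simp
        qed
      qed
    next
      case noodd: False
      show ?thesis
      proof (cases "lam 0 = {#}")
        case False
        then obtain k where k: "k \<in># lam 0" by (meson multiset_nonemptyE)
        have kev: "even k" using noodd k by auto
        have k0: "0 < k" using zero k by (cases k) auto
        have c2: "count (lam 0) k \<ge> 2" using cd1[OF kev] k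
          by (metis One_nat_def Suc_1 Suc_leI count_greater_zero_iff le_antisym not_less_eq_eq odd_one)
        let ?B = "\<lambda>j. (if j = 0 then {#k#} else {#}) + (if j = (r - 0) mod r then {#k#} else {#})"
        have B0: "?B 0 = {#k, k#}" by simp
        have Bj: "j \<noteq> 0 \<Longrightarrow> ?B j = {#}" for j by simp
        show ?thesis
        proof (rule step[where B = ?B and s = "2 * k"])
          show "?B j \<subseteq># lam j" for j
          proof (cases "j = 0")
            case True then show ?thesis using c2 by (auto simp: subseteq_mset_def)
          qed simp
          show "(\<Sum>j<r. sum_mset (?B j)) = 2 * k" using sum_two_mset[OF r r] by simp
          show "0 < 2 * k" using k0 by simp
          show "ach r (n - 2 * k + 2 * k) (\<lambda>j. mu j + ?B j)" if "ach r (n - 2 * k) mu" for mu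
            using ach_even'[OF that r k0 r] .
          show "condp r (\<lambda>j. lam j - ?B j)"
            unfolding condp_def
          proof (intro conjI allI impI)
            fix x :: nat assume "even x"
            show "even (count (lam 0 - ?B 0) x)"
            proof (cases "x = k")
              case True
              then show ?thesis using cd1[OF \<open>even x\<close>] c2 by simp
            next
              case False
              then show ?thesis using cd1[OF \<open>even x\<close>] by simp
            qed
          next
            fix t assume t: "1 \<le> t \<and> 2 * t < r"
            then show "lam t - ?B t = lam (r - t) - ?B (r - t)" using cd2[of t] by simp
          next
            fix x assume "even r"
            then have "r div 2 \<noteq> 0" using r by auto
            then show "even (count (lam (r div 2) - ?B (r div 2)) x)" using cd3[OF \<open>even r\<close>] by simp
          qed
        qed
      next
        case lz: True
        have j00: "j0 \<noteq> 0"
        proof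
          assume "j0 = 0" with j0(2) lz show False by simp
        qed
        obtain t0 where t0: "1 \<le> t0" "2 * t0 \<le> r" "lam t0 \<noteq> {#}"
        proof (cases "2 * j0 \<le> r")
          case True
          have "1 \<le> j0" using j00 by simp
          then show ?thesis using that[of j0] True j0(2) by blast
        next
          case False
          then have "1 \<le> r - j0" "2 * (r - j0) < r" using j0 by auto
          moreover have "lam (r - j0) = lam j0" using cd2[OF calculation] j0 by simp
          ultimately show ?thesis using that j0 by auto
        qed
        then obtain k where k: "k \<in># lam t0" by (meson multiset_nonemptyE)
        have k0: "0 < k" using zero k by (cases k) auto
        have t0r: "t0 < r" using t0 by linarith
        let ?B = "\<lambda>j. (if j = t0 then {#k#} else {#}) + (if j = (r - t0) mod r then {#k#} else {#})"
        show ?thesis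
        proof (cases "2 * t0 < r")
          case True
          have rt: "(r - t0) mod r = r - t0" "r - t0 \<noteq> t0" "r - t0 \<noteq> 0" using True t0 by auto
          have k': "k \<in># lam (r - t0)" using cd2[OF t0(1) True] k by simp
          show ?thesis
          proof (rule step[where B = ?B and s = "2 * k"])
            show "?B j \<subseteq># lam j" for j using k k' rt by auto
            show "(\<Sum>j<r. sum_mset (?B j)) = 2 * k" using sum_two_mset[OF t0r, of "(r - t0) mod r"] r by simp
            show "0 < 2 * k" using k0 by simp
            show "ach r (n - 2 * k + 2 * k) (\<lambda>j. mu j + ?B j)" if "ach r (n - 2 * k) mu" for mu
              using ach_even'[OF that r k0 t0r] .
            show "condp r (\<lambda>j. lam j - ?B j)"
              unfolding condp_def
            proof (intro conjI allI impI)
              fix x :: nat assume "even x"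
              show "even (count (lam 0 - ?B 0) x)" using cd1[OF \<open>even x\<close>] rt t0 by simp
            next
              fix t assume t: "1 \<le> t \<and> 2 * t < r"
              have "?B t = (if t = t0 then {#k#} else {#})" "?B (r - t) = (if t = t0 then {#k#} else {#})"
                using t rt True by auto
              then show "lam t - ?B t = lam (r - t) - ?B (r - t)" using cd2[of t] t by simp
            next
              fix x assume "even r"
              have "?B (r div 2) = {#}" using True rt \<open>even r\<close> by auto
              then show "even (count (lam (r div 2) - ?B (r div 2)) x)" using cd3[OF \<open>even r\<close>] by simp
            qed
          qed
        next
          case False
          then have rt: "2 * t0 = r" "(r - t0) mod r = t0" "even r" "r div 2 = t0" using t0 by auto
          have c2: "count (lam t0) k \<ge> 2" using cd3[OF rt(3), of k] k rt(4)
            by (metis One_nat_def Suc_1 Suc_leI count_greater_zero_iff le_antisym not_less_eq_eq odd_one)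
          have Bt: "?B t0 = {#k, k#}" using rt by simp
          have Bj: "j \<noteq> t0 \<Longrightarrow> ?B j = {#}" for j using rt by simp
          show ?thesis
          proof (rule step[where B = ?B and s = "2 * k"])
            show "?B j \<subseteq># lam j" for j
            proof (cases "j = t0")
              case True then show ?thesis using c2 Bt by (auto simp: subseteq_mset_def)
            next
              case False then show ?thesis using rt(2) by simp
            qed
            show "(\<Sum>j<r. sum_mset (?B j)) = 2 * k" using sum_two_mset[OF t0r, of "(r - t0) mod r"] r by simp
            show "0 < 2 * k" using k0 by simp
            show "ach r (n - 2 * k + 2 * k) (\<lambda>j. mu j + ?B j)" if "ach r (n - 2 * k) mu" for mu
              using ach_even'[OF that r k0 t0r] .
            show "condp r (\<lambda>j. lam j - ?B j)"
              unfolding condp_def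
            proof (intro conjI allI impI)
              fix x :: nat assume "even x"
              have "t0 \<noteq> 0" using t0 by auto
              then show "even (count (lam 0 - ?B 0) x)" using cd1[OF \<open>even x\<close>] rt(2) by simp
            next
              fix t assume t: "1 \<le> t \<and> 2 * t < r"
              have "t \<noteq> t0" "r - t \<noteq> t0" using t rt by auto
              then show "lam t - ?B t = lam (r - t) - ?B (r - t)" using cd2[of t] t Bj by simp
            next
              fix x assume "even r"
              show "even (count (lam (r div 2) - ?B (r div 2)) x)"
              proof (cases "x = k")
                case True
                then show ?thesis using cd3[OF \<open>even r\<close>, of x] c2 rt Bt by simp
              next
                case False
                then show ?thesis using cd3[OF \<open>even r\<close>, of x] rt Bt by simp
              qed
            qed
          qed
        qed
      qed
    qed
  qed
qed


theorem proposition6p11: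
  fixes r n :: nat and lam :: "nat \<Rightarrow> nat multiset"
  assumes "0 < r" and "rpartite_partition r n lam"
  shows "(\<exists>g. in_G r n g \<and> cycle_type r n (gmult r n g (gbar r n g)) = lam) \<longleftrightarrow>
     ((\<forall>k. even k \<longrightarrow> even (count (lam 0) k)) \<and>
      (\<forall>t. 1 \<le> t \<and> 2 * t < r \<longrightarrow> lam t = lam (r - t)) \<and>
      (even r \<longrightarrow> (\<forall>k. even (count (lam (r div 2)) k))))"
proof
  assume "\<exists>g. in_G r n g \<and> cycle_type r n (gmult r n g (gbar r n g)) = lam"
  then obtain g where g: "in_G r n g" "cycle_type r n (gmult r n g (gbar r n g)) = lam" by blast
  show "(\<forall>k. even k \<longrightarrow> even (count (lam 0) k)) \<and>
      (\<forall>t. 1 \<le> t \<and> 2 * t < r \<longrightarrow> lam t = lam (r - t)) \<and>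
      (even r \<longrightarrow> (\<forall>k. even (count (lam (r div 2)) k)))"
    using forward[OF assms(1) g(1)] unfolding g(2) .
next
  assume "(\<forall>k. even k \<longrightarrow> even (count (lam 0) k)) \<and>
      (\<forall>t. 1 \<le> t \<and> 2 * t < r \<longrightarrow> lam t = lam (r - t)) \<and>
      (even r \<longrightarrow> (\<forall>k. even (count (lam (r div 2)) k)))"
  then have "condp r lam" unfolding condp_def .
  from backward[OF assms(1) assms(2) this]
  show "\<exists>g. in_G r n g \<and> cycle_type r n (gmult r n g (gbar r n g)) = lam"
    unfolding ach_def sqg_def .
qed

end
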